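(* Assume the setting and Algorithm 1 described in the context, with $|Q|\ge2$. Take parameters $P=\Theta(\frac{M^2}{\varepsilon_1^2}\log|Q|)$, $R=\Theta(\frac{M}{\varepsilon_1})$ and $T=\Theta(\frac{R}{\varepsilon_2}\log|Q|)$, with suitable absolute constants. Then with probability at least $7/8$ the distribution $\hat q$ returned by Algorithm 1 satisfies $\mathrm{Inv}(\hat q)\le\varepsilon_2$.
   Context: Setting. $X$ is a countable set and $p$ is a probability distribution on $X$. For a distribution $q$ on $X$, $q_x$ is the mass of $x$, $\mathrm{supp}(q)=\{x:q_x>0\}$, and $q(A)=\sum_{x\in A}q_x$. An invalidity function $\mathrm{Inv}:X\to\{0,1\}$ is given with $\mathrm{Inv}(x)=0$ for all $x\in\mathrm{supp}(p)$. For a distribution $q$, $\mathrm{Inv}(q)=\mathbb{E}_{x\sim q}[\mathrm{Inv}(x)]$. Fix $M>0$ and a monotone non-increasing function $L:[0,1]\to[0,M]$, and set $\mathrm{Loss}(q)=\mathbb{E}_{x\sim p}[L(q_x)]$. The learner may draw i.i.d. samples from $p$ and may query $\mathrm{Inv}(x)$ at any point $x$. $Q$ is a finite family of probability distributions on $X$ containing at least one $q$ with $\mathrm{Inv}(q)=0$. $q^*$ denotes a minimizer of $\mathrm{Loss}(q)$ over $\{q\in Q:\mathrm{Inv}(q)=0\}$. Oracle. For a finite multiset $X_P$ and a finite set $X_N\subseteq X$, $\mathrm{Oracle}(X_P,X_N)$ returns some $q\in Q$ minimizing $\frac1{|X_P|}\sum_{x\in X_P}L(q_x)$ among all $q\in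 Q$ with $\mathrm{supp}(q)\cap X_N=\emptyset$. Algorithm 1 (parameters $P,R,T$): (1) Draw a multiset $X_P$ of $P$ i.i.d. samples from $p$. Set $X_N=\emptyset$. (2) For $i=1,\dots,R$: let $q^i=\mathrm{Oracle}(X_P,X_N)$. Draw $T$ i.i.d. samples from $q^i$ and query the invalidity of each. If none is invalid, output $q^i$ and stop. Otherwise add all invalid ones to $X_N$. (3) If no output has been produced after $R$ rounds, choose $i$ uniformly from $\{1,\dots,R\}$ and let $A^i=\{x:\exists j>i,\ x\in\mathrm{supp}(q^j)\}$. Output the distribution $\hat q$ that draws $x\sim q^i$ and returns $x$ if $x\in A^i$, and otherwise returns a fixed point $x^*$ with $\mathrm{Inv}(x^* )=0$. *)

theory Defs
  imports "HOL-Probability.Probability_Mass_Function" "HOL-Library.Multiset"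
begin

text \<open>The countable ground set X is represented by nat (every countable set embeds
into nat); invalidity is a predicate (True = invalid, i.e. Inv x = 1).\<close>

definition invalidity :: "(nat \<Rightarrow> bool) \<Rightarrow> nat pmf \<Rightarrow> real" where
  "invalidity Inv q = measure_pmf.prob q {x. Inv x}"

primrec samples :: "nat \<Rightarrow> nat pmf \<Rightarrow> nat list pmf" where
  "samples 0 q = return_pmf []"
| "samples (Suc n) q = bind_pmf q (\<lambda>x. map_pmf (Cons x) (samples n q))"

definition emp_loss :: "(real \<Rightarrow> real) \<Rightarrow> nat multiset \<Rightarrow> nat pmf \<Rightarrow> real" where
  "emp_loss L XP q = sum_mset (image_mset (\<lambda>x. L (pmf q x)) XP) / real (size XP)"

definition is_oracle ::
  "nat pmf set \<Rightarrow> (real \<Rightarrow> real) \<Rightarrow> (nat multiset \<Rightarrow> nat set \<Rightarrow> nat pmf) \<Rightarrow> bool" where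
  "is_oracle Q L orc \<longleftrightarrow>
     (\<forall>XP XN. finite XN \<and> XP \<noteq> {#} \<and> (\<exists>q\<in>Q. set_pmf q \<inter> XN = {}) \<longrightarrow>
        orc XP XN \<in> Q \<and> set_pmf (orc XP XN) \<inter> XN = {} \<and>
        (\<forall>q\<in>Q. set_pmf q \<inter> XN = {} \<longrightarrow> emp_loss L XP (orc XP XN) \<le> emp_loss L XP q))"

text \<open>Main loop of Algorithm 1 with r remaining rounds, current XN and history of
the q^i produced so far.  Result: Inl q = early output, Inr [q^1,...,q^R].\<close>
primrec rounds ::
  "(nat \<Rightarrow> bool) \<Rightarrow> (nat multiset \<Rightarrow> nat set \<Rightarrow> nat pmf) \<Rightarrow> nat multiset \<Rightarrow> nat \<Rightarrow>
   nat \<Rightarrow> nat set \<Rightarrow> nat pmf list \<Rightarrow> (nat pmf + nat pmf list) pmf" where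
  "rounds Inv orc XP T 0 XN hist = return_pmf (Inr hist)"
| "rounds Inv orc XP T (Suc r) XN hist =
     (let q = orc XP XN in
      bind_pmf (samples T q) (\<lambda>xs.
        let bad = {x \<in> set xs. Inv x} in
        if bad = {} then return_pmf (Inl q)
        else rounds Inv orc XP T r (XN \<union> bad) (hist @ [q])))"

definition fallback :: "nat \<Rightarrow> nat pmf list \<Rightarrow> nat \<Rightarrow> nat pmf" where
  "fallback xstar qs i =
     map_pmf (\<lambda>x. if (\<exists>j. i < j \<and> j < length qs \<and> x \<in> set_pmf (qs ! j)) then x else xstar)
       (qs ! i)"

definition algorithm1 ::
  "nat pmf \<Rightarrow> (nat \<Rightarrow> bool) \<Rightarrow> (nat multiset \<Rightarrow> nat set \<Rightarrow> nat pmf) \<Rightarrow> nat \<Rightarrow>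
   nat \<Rightarrow> nat \<Rightarrow> nat \<Rightarrow> nat pmf pmf" where
  "algorithm1 p Inv orc xstar P R T =
     bind_pmf (samples P p) (\<lambda>xs.
       bind_pmf (rounds Inv orc (mset xs) T R {} []) (\<lambda>res.
         case res of
           Inl q \<Rightarrow> return_pmf q
         | Inr qs \<Rightarrow> map_pmf (fallback xstar qs) (pmf_of_set {0..<R})))"

end

theory Submission
  imports Defs
begin


lemma set_samples: "xs \<in> set_pmf (samples n q) \<Longrightarrow> length xs = n \<and> set xs \<subseteq> set_pmf q"
  by (induction n arbitrary: xs) fastforce+

lemma prob_samples_all:
  "measure_pmf.prob (samples n q) {xs. \<forall>x\<in>set xs. P x} = (measure_pmf.prob q {x. P x})^n"
proof (induction n)
  case 0
  then show ?case by simp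
next
  case (Suc n)
  have "emeasure (measure_pmf (samples (Suc n) q)) {xs. \<forall>x\<in>set xs. P x}
     = (\<integral>\<^sup>+x. indicator {x. P x} x * ennreal ((measure_pmf.prob q {x. P x})^n) \<partial>measure_pmf q)"
    unfolding samples.simps emeasure_bind_pmf
    apply (rule nn_integral_cong)
    apply (simp add: emeasure_map_pmf vimage_def)
    apply (simp add: measure_pmf.emeasure_eq_measure Suc split: split_indicator)
    done
  also have "\<dots> = ennreal ((measure_pmf.prob q {x. P x})^n) * emeasure (measure_pmf q) {x. P x}"
    by (simp add: nn_integral_multc mult.commute)
  finally have "ennreal (measure_pmf.prob (samples (Suc n) q) {xs. \<forall>x\<in>set xs. P x})
     = ennreal ((measure_pmf.prob q {x. P x})^Suc n)"
    by (simp add: measure_pmf.emeasure_eq_measure ennreal_mult'' measure_nonneg mult.commute)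
  then show ?case by (simp add: measure_nonneg)
qed


lemma bind_bound:
  fixes c :: real
  assumes h: "\<And>x. x \<in> set_pmf A \<Longrightarrow> measure_pmf.prob (f x) S \<le> indicator E1 x + indicator E2 x + c"
    and c: "c \<ge> 0"
  shows "measure_pmf.prob (bind_pmf A f) S \<le> measure_pmf.prob A E1 + measure_pmf.prob A E2 + c"
proof -
  have "emeasure (measure_pmf (bind_pmf A f)) S = (\<integral>\<^sup>+x. emeasure (measure_pmf (f x)) S \<partial>measure_pmf A)"
    by simp
  also have "\<dots> \<le> (\<integral>\<^sup>+x. (indicator E1 x + indicator E2 x + ennreal c) \<partial>measure_pmf A)"
  proof (rule nn_integral_mono_AE, rule AE_pmfI)
    fix x assume x: "x \<in> set_pmf A"
    have "ennreal (measure_pmf.prob (f x) S) \<le> ennreal (indicator E1 x + indicator E2 x + c)"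
      using h[OF x] by (rule ennreal_leI)
    moreover have "ennreal (indicator E1 x + indicator E2 x + c) = indicator E1 x + indicator E2 x + ennreal c"
      using c by (simp add: ennreal_plus split: split_indicator)
    ultimately show "emeasure (measure_pmf (f x)) S \<le> indicator E1 x + indicator E2 x + ennreal c"
      by (simp add: measure_pmf.emeasure_eq_measure)
  qed
  also have "\<dots> = emeasure (measure_pmf A) E1 + emeasure (measure_pmf A) E2 + ennreal c"
    by (simp add: nn_integral_add)
  also have "\<dots> = ennreal (measure_pmf.prob A E1 + measure_pmf.prob A E2 + c)"
    using c by (simp add: measure_pmf.emeasure_eq_measure ennreal_plus measure_nonneg)
  finally have "ennreal (measure_pmf.prob (bind_pmf A f) S) \<le> ennreal (measure_pmf.prob A E1 + measure_pmf.prob A E2 + c)"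
    by (simp only: measure_pmf.emeasure_eq_measure)
  then show ?thesis
    using c by (subst (asm) ennreal_le_iff) (auto intro: add_nonneg_nonneg measure_nonneg)
qed


lemma oracle_ok:
  assumes "is_oracle Q L orc" "XP \<noteq> {#}" "q0 \<in> Q" "set_pmf q0 \<inter> {x. Inv x} = {}"
    "finite XN" "XN \<subseteq> {x. Inv x}"
  shows "orc XP XN \<in> Q \<and> set_pmf (orc XP XN) \<inter> XN = {}"
proof -
  have "set_pmf q0 \<inter> XN = {}" using assms(4,6) by blast
  then show ?thesis using assms(1,2,3,5) unfolding is_oracle_def by blast
qed

lemma rounds_support:
  assumes orc: "is_oracle Q L orc" and XP: "XP \<noteq> {#}" and q0: "q0 \<in> Q" "set_pmf q0 \<inter> {x. Inv x} = {}"
  shows "finite XN \<Longrightarrow> XN \<subseteq> {x. Inv x} \<Longrightarrow> res \<in> set_pmf (rounds Inv orc XP T r XN hist) \<Longrightarrow>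
   (case res of Inl q \<Rightarrow> True | Inr qs \<Rightarrow> \<exists>new. qs = hist @ new \<and> length new = r \<and>
       (\<forall>q\<in>set new. q \<in> Q \<and> set_pmf q \<inter> XN = {}))"
proof (induction r arbitrary: XN hist res)
  case 0
  then show ?case by auto
next
  case (Suc r)
  define q where "q = orc XP XN"
  have qQ: "q \<in> Q" "set_pmf q \<inter> XN = {}"
    using oracle_ok[OF orc XP q0 Suc.prems(1,2)] q_def by auto
  from Suc.prems(3) obtain xs where xs: "xs \<in> set_pmf (samples T q)"
    and res: "res \<in> set_pmf (let bad = {x \<in> set xs. Inv x} in
        if bad = {} then return_pmf (Inl q)
        else rounds Inv orc XP T r (XN \<union> bad) (hist @ [q]))"
    using Suc.prems(3) unfolding q_def by (auto simp: Let_def)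
  show ?case
  proof (cases "{x \<in> set xs. Inv x} = {}")
    case True
    then show ?thesis using res by simp
  next
    case False
    then have res': "res \<in> set_pmf (rounds Inv orc XP T r (XN \<union> {x \<in> set xs. Inv x}) (hist @ [q]))"
      using res False by (auto simp add: Let_def split: if_splits)
    have "finite (XN \<union> {x \<in> set xs. Inv x})" using Suc.prems(1) by auto
    moreover have "XN \<union> {x \<in> set xs. Inv x} \<subseteq> {x. Inv x}" using Suc.prems(2) by auto
    ultimately have IH: "case res of Inl q \<Rightarrow> True | Inr qs \<Rightarrow> \<exists>new. qs = (hist @ [q]) @ new \<and> length new = r \<and>
       (\<forall>q'\<in>set new. q' \<in> Q \<and> set_pmf q' \<inter> (XN \<union> {x \<in> set xs. Inv x}) = {})"
      using Suc.IH res' by blast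
    show ?thesis
    proof (cases res)
      case (Inl a) then show ?thesis by simp
    next
      case (Inr qs)
      then obtain new where "qs = (hist @ [q]) @ new" "length new = r"
        "\<forall>q'\<in>set new. q' \<in> Q \<and> set_pmf q' \<inter> (XN \<union> {x \<in> set xs. Inv x}) = {}"
        using IH by auto
      then have "qs = hist @ (q # new) \<and> length (q # new) = Suc r \<and>
         (\<forall>q'\<in>set (q # new). q' \<in> Q \<and> set_pmf q' \<inter> XN = {})" using qQ by auto
      then show ?thesis using Inr by auto
    qed
  qed
qed



definition badpairs :: "(nat \<Rightarrow> bool) \<Rightarrow> real \<Rightarrow> nat pmf list \<Rightarrow> nat pmf list \<Rightarrow> bool" where
  "badpairs Inv \<delta> hist qs \<longleftrightarrow> (\<exists>i j. length hist \<le> i \<and> i < j \<and> j < length qs \<and>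
      measure_pmf.prob (qs!i) {x. Inv x \<and> x \<in> set_pmf (qs!j)} > \<delta>)"

definition badres :: "(nat \<Rightarrow> bool) \<Rightarrow> real \<Rightarrow> real \<Rightarrow> nat pmf list \<Rightarrow> (nat pmf + nat pmf list) \<Rightarrow> bool" where
  "badres Inv \<epsilon> \<delta> hist res = (case res of Inl q \<Rightarrow> invalidity Inv q > \<epsilon> | Inr qs \<Rightarrow> badpairs Inv \<delta> hist qs)"

lemma main_bound:
  fixes \<epsilon> \<delta> :: real and T :: nat
  assumes orc: "is_oracle Q L orc" and XP: "XP \<noteq> {#}" and q0: "q0 \<in> Q" "set_pmf q0 \<inter> {x. Inv x} = {}"
    and fin: "finite Q" and eps: "0 \<le> \<epsilon>" "\<epsilon> \<le> 1" and del: "0 \<le> \<delta>" "\<delta> \<le> 1"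
  defines "\<beta> \<equiv> (1 - \<epsilon>)^T + real (card Q) * (1 - \<delta>)^T"
  shows "finite XN \<Longrightarrow> XN \<subseteq> {x. Inv x} \<Longrightarrow>
    measure_pmf.prob (rounds Inv orc XP T r XN hist) {res. badres Inv \<epsilon> \<delta> hist res}
      \<le> real (card {q\<in>Q. set_pmf q \<inter> XN = {}}) * \<beta>"
proof (induction r arbitrary: XN hist)
  have b0: "\<beta> \<ge> 0" unfolding \<beta>_def using eps del by simp
  {
  case 0
  have "{res. badres Inv \<epsilon> \<delta> hist res} \<inter> set_pmf (rounds Inv orc XP T 0 XN hist) = {}"
    by (auto simp: badres_def badpairs_def)
  then have "measure_pmf.prob (rounds Inv orc XP T 0 XN hist) {res. badres Inv \<epsilon> \<delta> hist res} = 0"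
    by (metis measure_Int_set_pmf measure_empty)
  then show ?case using b0 by simp
  }
next
  case (Suc r)
  have b0: "\<beta> \<ge> 0" unfolding \<beta>_def using eps del by simp
  define q where "q = orc XP XN"
  have qQ: "q \<in> Q" "set_pmf q \<inter> XN = {}"
    using oracle_ok[OF orc XP q0 Suc.prems(1,2)] q_def by auto
  define A where "A = {q\<in>Q. set_pmf q \<inter> XN = {}}"
  have qA: "q \<in> A" using qQ A_def by auto
  have finA: "finite A" using fin A_def by auto
  then have N1: "card A \<ge> 1" using qA by (metis One_nat_def Suc_leI card_gt_0_iff empty_iff)
  define K where "K = {q'\<in>Q. measure_pmf.prob q {x. Inv x \<and> x \<in> set_pmf q'} > \<delta>}"
  define E1 where "E1 = {xs. invalidity Inv q > \<epsilon> \<and> (\<forall>x\<in>set xs. \<not> Inv x)}"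
  define E2 where "E2 = (\<Union>q'\<in>K. {xs. \<forall>x\<in>set xs. \<not> (Inv x \<and> x \<in> set_pmf q')})"
  define c where "c = (real (card A) - 1) * \<beta>"
  have c0: "c \<ge> 0" using N1 b0 c_def by simp
  define g where "g = (\<lambda>xs. let bad = {x \<in> set xs. Inv x} in
        if bad = {} then return_pmf (Inl q)
        else rounds Inv orc XP T r (XN \<union> bad) (hist @ [q]))"
  have eq: "rounds Inv orc XP T (Suc r) XN hist = bind_pmf (samples T q) g"
    unfolding g_def q_def by (simp add: Let_def)
  have pw: "measure_pmf.prob (g xs) {res. badres Inv \<epsilon> \<delta> hist res} \<le> indicator E1 xs + indicator E2 xs + c"
    if xs: "xs \<in> set_pmf (samples T q)" for xs
  proof (cases "{x \<in> set xs. Inv x} = {}")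
    case True
    then have geq: "g xs = return_pmf (Inl q)" unfolding g_def by (simp add: Let_def)
    show ?thesis
    proof (cases "invalidity Inv q > \<epsilon>")
      case True2: True
      then have "xs \<in> E1" using True unfolding E1_def by auto
      then have "(indicator E1 xs::real) = 1" by simp
      moreover have "(indicator E2 xs::real) \<ge> 0" by simp
      ultimately show ?thesis using c0 measure_pmf.prob_le_1[of "g xs" "{res. badres Inv \<epsilon> \<delta> hist res}"] by linarith
    next
      case False
      then have "measure_pmf.prob (g xs) {res. badres Inv \<epsilon> \<delta> hist res} = 0"
        unfolding geq by (simp add: badres_def)
      then show ?thesis using c0 by (simp add: indicator_def)
    qed
  next
    case False
    define XN' where "XN' = XN \<union> {x \<in> set xs. Inv x}"
    have geq: "g xs = rounds Inv orc XP T r XN' (hist @ [q])"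
      unfolding g_def XN'_def using False by (auto simp add: Let_def)
    have finXN': "finite XN'" using Suc.prems(1) XN'_def by auto
    have subXN': "XN' \<subseteq> {x. Inv x}" using Suc.prems(2) XN'_def by auto
    show ?thesis
    proof (cases "xs \<in> E2")
      case True
      then have "(indicator E2 xs::real) = 1" by simp
      moreover have "(indicator E1 xs::real) \<ge> 0" by simp
      ultimately show ?thesis using c0 measure_pmf.prob_le_1[of "g xs" "{res. badres Inv \<epsilon> \<delta> hist res}"] by linarith
    next
      case notE2: False
      have sub: "{res. badres Inv \<epsilon> \<delta> hist res} \<inter> set_pmf (g xs) \<subseteq> {res. badres Inv \<epsilon> \<delta> (hist @ [q]) res}"
      proof
        fix res assume "res \<in> {res. badres Inv \<epsilon> \<delta> hist res} \<inter> set_pmf (g xs)"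
        then have b: "badres Inv \<epsilon> \<delta> hist res" and rs: "res \<in> set_pmf (rounds Inv orc XP T r XN' (hist @ [q]))"
          using geq by auto
        show "res \<in> {res. badres Inv \<epsilon> \<delta> (hist @ [q]) res}"
        proof (cases res)
          case (Inl a) then show ?thesis using b by (simp add: badres_def)
        next
          case (Inr qs)
          obtain new where qs: "qs = (hist @ [q]) @ new" and newQ: "\<forall>q'\<in>set new. q' \<in> Q \<and> set_pmf q' \<inter> XN' = {}"
            using rounds_support[OF orc XP q0 finXN' subXN' rs] Inr by auto
          from b Inr obtain i j where ij: "length hist \<le> i" "i < j" "j < length qs"
            "measure_pmf.prob (qs!i) {x. Inv x \<and> x \<in> set_pmf (qs!j)} > \<delta>"
            by (auto simp: badres_def badpairs_def)
          show ?thesis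
          proof (cases "i = length hist")
            case False
            then have "badpairs Inv \<delta> (hist @ [q]) qs" unfolding badpairs_def using ij
              by (intro exI[of _ i] exI[of _ j]) auto
            then show ?thesis using Inr by (simp add: badres_def)
          next
            case True
            have qi: "qs ! i = q" using True qs by (simp add: nth_append)
            have "qs ! j = new ! (j - Suc (length hist))" "j - Suc (length hist) < length new"
              using True ij qs by (auto simp: nth_append)
            then have qjn: "qs ! j \<in> set new" by simp
            then have qjQ: "qs ! j \<in> Q" "set_pmf (qs ! j) \<inter> XN' = {}" using newQ by auto
            then have "qs ! j \<in> K" using ij(4) qi unfolding K_def by auto
            then obtain x where "x \<in> set xs" "Inv x" "x \<in> set_pmf (qs ! j)"
              using notE2 unfolding E2_def by blast
            then have False using qjQ(2) XN'_def by auto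
            then show ?thesis ..
          qed
        qed
      qed
      have "measure_pmf.prob (g xs) {res. badres Inv \<epsilon> \<delta> hist res}
          = measure_pmf.prob (g xs) ({res. badres Inv \<epsilon> \<delta> hist res} \<inter> set_pmf (g xs))"
        by (simp add: measure_Int_set_pmf)
      also have "\<dots> \<le> measure_pmf.prob (g xs) {res. badres Inv \<epsilon> \<delta> (hist @ [q]) res}"
        using sub by (intro measure_pmf.finite_measure_mono) auto
      also have "\<dots> \<le> real (card {q\<in>Q. set_pmf q \<inter> XN' = {}}) * \<beta>"
        unfolding geq by (rule Suc.IH[OF finXN' subXN'])
      also have "\<dots> \<le> c"
      proof -
        have "{q\<in>Q. set_pmf q \<inter> XN' = {}} \<subseteq> A - {q}"
        proof
          fix q' assume q': "q' \<in> {q\<in>Q. set_pmf q \<inter> XN' = {}}"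
          obtain x where "x \<in> set xs" "Inv x" using False by auto
          moreover have "set xs \<subseteq> set_pmf q" using set_samples[OF xs] by auto
          ultimately have "q' \<noteq> q" using q' XN'_def by auto
          then show "q' \<in> A - {q}" using q' XN'_def A_def by auto
        qed
        then have "card {q\<in>Q. set_pmf q \<inter> XN' = {}} \<le> card A - 1"
          using finA qA by (metis card_Diff_singleton card_mono finite_Diff)
        then have "real (card {q\<in>Q. set_pmf q \<inter> XN' = {}}) \<le> real (card A) - 1"
          using N1 by linarith
        then show ?thesis unfolding c_def using b0 by (rule mult_right_mono)
      qed
      finally show ?thesis using c0 by (simp add: indicator_def)
    qed
  qed
  have compl: "measure_pmf.prob q {x. \<not> P x} = 1 - measure_pmf.prob q {x. P x}" for P
  proof -
    have "{x. \<not> P x} = space (measure_pmf q) - {x. P x}" by auto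
    then show ?thesis using measure_pmf.prob_compl[of "{x. P x}" q] by simp
  qed
  have pE1: "measure_pmf.prob (samples T q) E1 \<le> (1 - \<epsilon>)^T"
  proof (cases "invalidity Inv q > \<epsilon>")
    case True
    then have "E1 = {xs. \<forall>x\<in>set xs. \<not> Inv x}" unfolding E1_def by auto
    then have "measure_pmf.prob (samples T q) E1 = (1 - invalidity Inv q)^T"
      by (simp add: prob_samples_all compl invalidity_def)
    also have "\<dots> \<le> (1 - \<epsilon>)^T"
      using True by (intro power_mono) (auto simp: invalidity_def)
    finally show ?thesis .
  next
    case False
    then have "E1 = {}" unfolding E1_def by auto
    then show ?thesis using eps by simp
  qed
  have pE2: "measure_pmf.prob (samples T q) E2 \<le> real (card Q) * (1 - \<delta>)^T"
  proof -
    have finK: "finite K" using fin K_def by auto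
    have "measure_pmf.prob (samples T q) E2 \<le>
       (\<Sum>q'\<in>K. measure_pmf.prob (samples T q) {xs. \<forall>x\<in>set xs. \<not> (Inv x \<and> x \<in> set_pmf q')})"
      unfolding E2_def by (rule measure_pmf.finite_measure_subadditive_finite[OF finK]) auto
    also have "\<dots> \<le> (\<Sum>q'\<in>K. (1 - \<delta>)^T)"
    proof (rule sum_mono)
      fix q' assume "q' \<in> K"
      then have "measure_pmf.prob q {x. Inv x \<and> x \<in> set_pmf q'} > \<delta>" unfolding K_def by auto
      then show "measure_pmf.prob (samples T q) {xs. \<forall>x\<in>set xs. \<not> (Inv x \<and> x \<in> set_pmf q')} \<le> (1 - \<delta>)^T"
        by (simp only: prob_samples_all compl) (intro power_mono, auto)
    qed
    also have "\<dots> = real (card K) * (1 - \<delta>)^T" by simp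
    also have "\<dots> \<le> real (card Q) * (1 - \<delta>)^T"
      using del fin by (intro mult_right_mono) (auto simp: K_def intro: card_mono)
    finally show ?thesis .
  qed
  have "measure_pmf.prob (rounds Inv orc XP T (Suc r) XN hist) {res. badres Inv \<epsilon> \<delta> hist res}
      \<le> measure_pmf.prob (samples T q) E1 + measure_pmf.prob (samples T q) E2 + c"
    unfolding eq by (rule bind_bound[OF pw c0])
  also have "\<dots> \<le> \<beta> + c" using pE1 pE2 unfolding \<beta>_def by simp
  also have "\<dots> = real (card A) * \<beta>" unfolding c_def by (simp add: algebra_simps)
  finally show ?case unfolding A_def .
qed



lemma numeric:
  fixes n \<epsilon> \<delta> :: real and T :: nat
  assumes n: "n \<ge> 2" and d: "0 \<le> \<delta>" "\<delta> \<le> \<epsilon>" "\<epsilon> \<le> 1" and dT: "\<delta> * real T \<ge> 6 * ln n"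
  shows "n * ((1 - \<epsilon>)^T + n * (1 - \<delta>)^T) \<le> 1/8"
proof -
  define e where "e = (1/n)^6"
  have "(1 - \<delta>)^T \<le> exp (-\<delta>)^T"
    using d by (intro power_mono) (auto simp: exp_ge_add_one_self[of "-\<delta>", simplified])
  also have "\<dots> = exp (real T * (-\<delta>))" by (rule exp_of_nat_mult[symmetric])
  also have "\<dots> \<le> exp (real 6 * (- ln n))" using dT by (simp add: mult.commute)
  also have "\<dots> = e" unfolding e_def exp_of_nat_mult using n by (simp add: exp_minus exp_ln inverse_eq_divide)
  finally have h1: "(1 - \<delta>)^T \<le> e" .
  have h2: "(1 - \<epsilon>)^T \<le> (1 - \<delta>)^T" using d by (intro power_mono) auto
  have e0: "e \<ge> 0" using n e_def by simp
  have "n * ((1 - \<epsilon>)^T + n * (1 - \<delta>)^T) \<le> n * (e + n * e)"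
    using h1 h2 n by (intro mult_left_mono add_mono) auto
  also have "\<dots> \<le> n * (n * e + n * e)" using n e0 mult_right_mono[of 1 n e] by (intro mult_left_mono add_mono) auto
  also have "\<dots> = 2 / n^4" unfolding e_def using n by (simp add: field_simps power_eq_if eval_nat_numeral)
  also have "\<dots> \<le> 2 / 2^4" using n by (intro divide_left_mono power_mono) auto
  finally show ?thesis by simp
qed



lemma fallback_inv:
  fixes \<delta> \<epsilon> :: real
  assumes xs: "\<not> Inv xstar" and i: "i < length qs"
    and pr: "\<forall>j. i < j \<and> j < length qs \<longrightarrow> measure_pmf.prob (qs!i) {x. Inv x \<and> x \<in> set_pmf (qs!j)} \<le> \<delta>"
    and d: "\<delta> \<ge> 0" "\<delta> * real (length qs) \<le> \<epsilon>"
  shows "invalidity Inv (fallback xstar qs i) \<le> \<epsilon>"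
proof -
  define h where "h = (\<lambda>x. if (\<exists>j. i < j \<and> j < length qs \<and> x \<in> set_pmf (qs ! j)) then x else xstar)"
  have "invalidity Inv (fallback xstar qs i) = measure_pmf.prob (qs!i) (h -` {x. Inv x})"
    unfolding invalidity_def fallback_def h_def by simp
  also have "\<dots> \<le> measure_pmf.prob (qs!i) (\<Union>j\<in>{i<..<length qs}. {x. Inv x \<and> x \<in> set_pmf (qs!j)})"
    using xs by (intro measure_pmf.finite_measure_mono) (auto simp: h_def split: if_splits)
  also have "\<dots> \<le> (\<Sum>j\<in>{i<..<length qs}. measure_pmf.prob (qs!i) {x. Inv x \<and> x \<in> set_pmf (qs!j)})"
    by (rule measure_pmf.finite_measure_subadditive_finite) auto
  also have "\<dots> \<le> (\<Sum>j\<in>{i<..<length qs}. \<delta>)" using pr by (intro sum_mono) auto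
  also have "\<dots> = real (card {i<..<length qs}) * \<delta>" by simp
  also have "\<dots> \<le> real (length qs) * \<delta>" using d by (intro mult_right_mono) auto
  finally show ?thesis using d by (simp add: mult.commute)
qed

lemma core:
  fixes p :: "nat pmf" and Inv :: "nat \<Rightarrow> bool" and M :: real and L :: "real \<Rightarrow> real"
    and Q :: "nat pmf set" and \<epsilon>1 \<epsilon>2 :: real and P R T :: nat
  assumes pvalid: "\<forall>x\<in>set_pmf p. \<not> Inv x" and M: "M > 0" and finQ: "finite Q" and cQ: "card Q \<ge> 2"
    and q0: "\<exists>q\<in>Q. invalidity Inv q = 0" and orc: "is_oracle Q L orc" and xstar: "\<not> Inv xstar"
    and e1: "\<epsilon>1 > 0" and e2: "\<epsilon>2 > 0"
    and P: "P = nat \<lceil>1 * M^2 / \<epsilon>1^2 * ln (real (card Q))\<rceil>"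
    and R: "R = nat \<lceil>1 * M / \<epsilon>1\<rceil>"
    and T: "T = nat \<lceil>6 * real R / \<epsilon>2 * ln (real (card Q))\<rceil>"
  shows "measure_pmf.prob (algorithm1 p Inv orc xstar P R T) {q. invalidity Inv q \<le> \<epsilon>2} \<ge> 7/8"
proof (cases "\<epsilon>2 \<ge> 1")
  case True
  have "{q. invalidity Inv q \<le> \<epsilon>2} = space (measure_pmf (algorithm1 p Inv orc xstar P R T))"
    using True measure_pmf.prob_le_1 by (auto simp: invalidity_def intro: order_trans)
  then show ?thesis by (simp add: measure_pmf.prob_space)
next
  case False
  define n where "n = real (card Q)"
  have n2: "n \<ge> 2" using cQ n_def by simp
  have ln0: "ln n > 0" using n2 by simp
  have "M / \<epsilon>1 > 0" using M e1 by simp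
  then have "\<lceil>1 * M / \<epsilon>1\<rceil> \<ge> 1" by simp
  then have R1: "R \<ge> 1" using R by linarith
  have "1 * M^2 / \<epsilon>1^2 * ln (real (card Q)) > 0" using M e1 ln0 n_def by simp
  then have "\<lceil>1 * M^2 / \<epsilon>1^2 * ln (real (card Q))\<rceil> \<ge> 1" by (simp only: one_le_ceiling)
  then have P1: "P \<ge> 1" using P by linarith
  define \<delta> where "\<delta> = \<epsilon>2 / real R"
  have d0: "0 \<le> \<delta>" using e2 \<delta>_def by simp
  have d1: "\<delta> \<le> \<epsilon>2" using R1 e2 \<delta>_def by (simp add: divide_le_eq)
  have dR: "\<delta> * real R = \<epsilon>2" using R1 \<delta>_def by simp
  have "6 * real R / \<epsilon>2 * ln n \<le> real T" using T n_def real_nat_ceiling_ge by simp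
  then have "\<delta> * (6 * real R / \<epsilon>2 * ln n) \<le> \<delta> * real T" using d0 by (rule mult_left_mono)
  moreover have "\<delta> * (6 * real R / \<epsilon>2 * ln n) = 6 * ln n" using R1 e2 \<delta>_def by simp
  ultimately have dT: "\<delta> * real T \<ge> 6 * ln n" by simp
  define \<beta> where "\<beta> = (1 - \<epsilon>2)^T + real (card Q) * (1 - \<delta>)^T"
  have nb: "n * \<beta> \<le> 1/8" unfolding \<beta>_def n_def[symmetric]
    using numeric[OF n2 d0 d1 _ dT] False by simp
  obtain q0 where q0Q: "q0 \<in> Q" and q0i: "set_pmf q0 \<inter> {x. Inv x} = {}"
    using q0 by (auto simp: invalidity_def measure_pmf_zero_iff)
  define Gc where "Gc = {q. \<not> invalidity Inv q \<le> \<epsilon>2}"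
  define F where "F = (\<lambda>res. case res of
           Inl q \<Rightarrow> return_pmf q
         | Inr qs \<Rightarrow> map_pmf (fallback xstar qs) (pmf_of_set {0..<R}))"
  have alg: "algorithm1 p Inv orc xstar P R T =
     bind_pmf (samples P p) (\<lambda>xs. bind_pmf (rounds Inv orc (mset xs) T R {} []) F)"
    unfolding algorithm1_def F_def ..
  have inner: "measure_pmf.prob (bind_pmf (rounds Inv orc (mset xs) T R {} []) F) Gc \<le> 1/8"
    if xs: "xs \<in> set_pmf (samples P p)" for xs
  proof -
    have XP: "mset xs \<noteq> {#}" using set_samples[OF xs] P1 by auto
    have pw: "measure_pmf.prob (F res) Gc \<le> indicator {res. badres Inv \<epsilon>2 \<delta> [] res} res + indicator {} res + 0"
      if res: "res \<in> set_pmf (rounds Inv orc (mset xs) T R {} [])" for res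
    proof (cases "badres Inv \<epsilon>2 \<delta> [] res")
      case True
      then show ?thesis using measure_pmf.prob_le_1[of "F res" Gc] by simp
    next
      case nb: False
      have "set_pmf (F res) \<inter> Gc = {}"
      proof (cases res)
        case (Inl q)
        then show ?thesis using nb by (auto simp: F_def Gc_def badres_def)
      next
        case (Inr qs)
        have len: "length qs = R"
          using rounds_support[OF orc XP q0Q q0i _ _ res] Inr by auto
        have nbp: "\<not> badpairs Inv \<delta> [] qs" using nb Inr by (simp add: badres_def)
        have nbp': "\<forall>i j. i < j \<and> j < length qs \<longrightarrow> measure_pmf.prob (qs ! i) {x. Inv x \<and> x \<in> set_pmf (qs ! j)} \<le> \<delta>"
          using nbp unfolding badpairs_def by (metis leI list.size(3) zero_le)
        have "invalidity Inv (fallback xstar qs i) \<le> \<epsilon>2" if "i < R" for i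
          using xstar that len nbp' d0 dR by (intro fallback_inv[where \<delta>=\<delta>]) auto
        then show ?thesis using Inr R1 by (auto simp: F_def Gc_def)
      qed
      then have "measure_pmf.prob (F res) Gc = 0" by (simp add: measure_pmf_zero_iff)
      then show ?thesis by simp
    qed
    have "measure_pmf.prob (bind_pmf (rounds Inv orc (mset xs) T R {} []) F) Gc
       \<le> measure_pmf.prob (rounds Inv orc (mset xs) T R {} []) {res. badres Inv \<epsilon>2 \<delta> [] res}
         + measure_pmf.prob (rounds Inv orc (mset xs) T R {} []) {} + 0"
      by (rule bind_bound[OF pw]) auto
    also have "\<dots> \<le> real (card {q\<in>Q. set_pmf q \<inter> {} = {}}) * \<beta>"
      using main_bound[OF orc XP q0Q q0i finQ, of \<epsilon>2 \<delta> "{}" T R "[]"] e2 False d0 d1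
      unfolding \<beta>_def by simp
    also have "\<dots> = n * \<beta>" unfolding n_def by simp
    finally show ?thesis using nb by simp
  qed
  have "measure_pmf.prob (algorithm1 p Inv orc xstar P R T) Gc \<le>
      measure_pmf.prob (samples P p) {} + measure_pmf.prob (samples P p) {} + 1/8"
    unfolding alg
  proof (rule bind_bound)
    fix xs assume "xs \<in> set_pmf (samples P p)"
    then show "measure_pmf.prob (bind_pmf (rounds Inv orc (mset xs) T R {} []) F) Gc
       \<le> indicator {} xs + indicator {} xs + 1/8" using inner by simp
  qed simp
  then have "measure_pmf.prob (algorithm1 p Inv orc xstar P R T) Gc \<le> 1/8" by simp
  moreover have "Gc = space (measure_pmf (algorithm1 p Inv orc xstar P R T)) - {q. invalidity Inv q \<le> \<epsilon>2}"
    unfolding Gc_def by auto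
  ultimately show ?thesis
    using measure_pmf.prob_compl[of "{q. invalidity Inv q \<le> \<epsilon>2}" "algorithm1 p Inv orc xstar P R T"] by simp
qed


theorem lemma1:
  shows "\<exists>c1 c2 c3 :: real. c1 > 0 \<and> c2 > 0 \<and> c3 > 0 \<and>
    (\<forall>(p :: nat pmf) (Inv :: nat \<Rightarrow> bool) (M :: real) (L :: real \<Rightarrow> real)
       (Q :: nat pmf set) orc xstar (\<epsilon>1 :: real) (\<epsilon>2 :: real) P R T.
       (\<forall>x\<in>set_pmf p. \<not> Inv x) \<and>
       M > 0 \<and>
       (\<forall>x\<in>{0..1}. 0 \<le> L x \<and> L x \<le> M) \<and>
       (\<forall>x y. 0 \<le> x \<and> x \<le> y \<and> y \<le> 1 \<longrightarrow> L y \<le> L x) \<and>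
       finite Q \<and> card Q \<ge> 2 \<and>
       (\<exists>q\<in>Q. invalidity Inv q = 0) \<and>
       is_oracle Q L orc \<and>
       \<not> Inv xstar \<and>
       \<epsilon>1 > 0 \<and> \<epsilon>2 > 0 \<and>
       P = nat \<lceil>c1 * M^2 / \<epsilon>1^2 * ln (real (card Q))\<rceil> \<and>
       R = nat \<lceil>c2 * M / \<epsilon>1\<rceil> \<and>
       T = nat \<lceil>c3 * real R / \<epsilon>2 * ln (real (card Q))\<rceil>
       \<longrightarrow> measure_pmf.prob (algorithm1 p Inv orc xstar P R T)
             {q. invalidity Inv q \<le> \<epsilon>2} \<ge> 7/8)"
  apply (rule exI[of _ 1], rule exI[of _ 1], rule exI[of _ 6])
  apply (intro conjI allI impI)
     apply simp
    apply simp
   apply simp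
  apply (elim conjE)
  apply (rule core; assumption)
  done

end
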